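(* Let $r=a/b$ with $a,b$ coprime positive integers, and for $\theta\in\mathbb{R}$ define $\mathcal R_\theta^*f(z,t)=f(e^{i\theta}z,t)$. Then for $f\in C_c^\infty(\overline{\mathbb{H}})$ and $(z,t)\in\overline{\mathbb{H}}$, $$I_r(\mathcal R_\theta^*f)(z,t)=(I_rf)\big(e^{i\theta}z,\ t-\tfrac12 r\theta\big),$$ and consequently $$I_r(\partial_\theta f)(z,t)=\big(\partial_\theta-\tfrac12 rT\big)I_rf(z,t).$$
   Context: $\mathbb{H}=\mathbb{C}\times\mathbb{R}$ (coordinates $z=x+iy$, $t$) with product $(x+iy,t)(u+iv,s)=(x+u+i(y+v),\,t+s+\tfrac12(xv-yu))$; $\overline{\mathbb{H}}=\mathbb{H}/\{(0,k\pi):k\in\mathbb{Z}\}\cong\mathbb{C}\times(\mathbb{R}/\pi\mathbb{Z})$. For $r=a/b$, $\gamma_r(s)=(\sqrt r e^{is/\sqrt r},\tfrac12\sqrt r s)$ and $I_rf(z,t)=\int_0^{2\pi\sqrt{ab}}f((z,t)\gamma_r(s))\,ds$. $T=\partial_t$, and $\partial_\theta=x\partial_y-y\partial_x$ is the rotational derivative in the $z$ variable, i.e. $\partial_\theta f=\frac{d}{d\theta}\big|_{\theta=0}\mathcal R^*_\theta f$. *)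

theory Defs
  imports "HOL-Analysis.Analysis"
begin

coinductive smooth_map :: "('a::real_normed_vector \<Rightarrow> 'b::real_normed_vector) \<Rightarrow> bool" where
  "(\<forall>x. f differentiable (at x)) \<Longrightarrow>
   (\<forall>v. smooth_map (\<lambda>x. frechet_derivative f (at x) v)) \<Longrightarrow> smooth_map f"

definition heis_mult :: "complex \<times> real \<Rightarrow> complex \<times> real \<Rightarrow> complex \<times> real" where
  "heis_mult p q = (fst p + fst q,
     snd p + snd q + 1/2 * (Re (fst p) * Im (fst q) - Im (fst p) * Re (fst q)))"

definition gamma_r :: "real \<Rightarrow> real \<Rightarrow> complex \<times> real" where
  "gamma_r r s = (complex_of_real (sqrt r) * cis (s / sqrt r), 1/2 * sqrt r * s)"

text \<open>Functions on the quotient H-bar are pi-periodic functions of (z,t).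
C_c^infty(H-bar): smooth, pi-periodic in t, support bounded in z.\<close>
definition Cc_Hbar :: "(complex \<Rightarrow> real \<Rightarrow> complex) \<Rightarrow> bool" where
  "Cc_Hbar f \<longleftrightarrow> smooth_map (\<lambda>p::complex \<times> real. f (fst p) (snd p))
     \<and> (\<forall>z t. f z (t + pi) = f z t)
     \<and> (\<exists>R. \<forall>z t. R < cmod z \<longrightarrow> f z t = 0)"

definition I_op :: "nat \<Rightarrow> nat \<Rightarrow> (complex \<Rightarrow> real \<Rightarrow> complex) \<Rightarrow> complex \<Rightarrow> real \<Rightarrow> complex" where
  "I_op a b f z t = integral {0 .. 2 * pi * sqrt (real a * real b)}
     (\<lambda>s. let p = heis_mult (z, t) (gamma_r (real a / real b) s) in f (fst p) (snd p))"

definition rot :: "real \<Rightarrow> (complex \<Rightarrow> real \<Rightarrow> complex) \<Rightarrow> complex \<Rightarrow> real \<Rightarrow> complex" where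
  "rot \<theta> f z t = f (cis \<theta> * z) t"

definition dtheta :: "(complex \<Rightarrow> real \<Rightarrow> complex) \<Rightarrow> complex \<Rightarrow> real \<Rightarrow> complex" where
  "dtheta f z t = vector_derivative (\<lambda>\<theta>. rot \<theta> f z t) (at 0)"

definition Tder :: "(complex \<Rightarrow> real \<Rightarrow> complex) \<Rightarrow> complex \<Rightarrow> real \<Rightarrow> complex" where
  "Tder f z t = vector_derivative (\<lambda>s. f z s) (at t)"

end

theory Submission
  imports Defs
begin


lemma smooth_map_D:
  assumes "smooth_map F"
  shows "(\<forall>x. F differentiable (at x)) \<and> (\<forall>v. smooth_map (\<lambda>x. frechet_derivative F (at x) v))"
  using assms by (cases rule: smooth_map.cases) auto

lemma smooth_cont:
  assumes "smooth_map F" shows "continuous_on S F"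
proof -
  have "\<forall>x. F differentiable (at x)" using smooth_map_D[OF assms] by blast
  then show ?thesis
    by (meson continuous_at_imp_continuous_on differentiable_imp_continuous_within)
qed

lemma smooth_has_deriv:
  assumes "smooth_map F"
  shows "(F has_derivative frechet_derivative F (at x)) (at x)"
  using smooth_map_D[OF assms] frechet_derivative_works by blast

lemma smooth_lin:
  assumes "smooth_map F"
  shows "linear (frechet_derivative F (at x))"
  using smooth_has_deriv[OF assms] has_derivative_linear by blast

lemma fd_expand:
  fixes F :: "complex \<times> real \<Rightarrow> complex"
  assumes "smooth_map F"
  shows "frechet_derivative F (at p) v =
     Re (fst v) *\<^sub>R frechet_derivative F (at p) (1,0)
   + Im (fst v) *\<^sub>R frechet_derivative F (at p) (\<i>,0)
   + snd v *\<^sub>R frechet_derivative F (at p) (0,1)"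
proof -
  have v: "v = Re (fst v) *\<^sub>R (1,0) + Im (fst v) *\<^sub>R (\<i>,0) + snd v *\<^sub>R ((0::complex),(1::real))"
    by (cases v) (simp add: complex_eq_iff)
  interpret linear "frechet_derivative F (at p)" by (rule smooth_lin[OF assms])
  have "frechet_derivative F (at p) v = frechet_derivative F (at p) (Re (fst v) *\<^sub>R (1,0) + Im (fst v) *\<^sub>R (\<i>,0) + snd v *\<^sub>R ((0::complex),(1::real)))"
    by (fact arg_cong[OF v, of "frechet_derivative F (at p)"])
  also have "\<dots> = Re (fst v) *\<^sub>R frechet_derivative F (at p) (1,0)
   + Im (fst v) *\<^sub>R frechet_derivative F (at p) (\<i>,0)
   + snd v *\<^sub>R frechet_derivative F (at p) (0,1)" by (simp only: add scale)
  finally show ?thesis .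
qed

lemma fd_cont:
  fixes F :: "complex \<times> real \<Rightarrow> complex"
  assumes "smooth_map F" "continuous_on S P" "continuous_on S V"
  shows "continuous_on S (\<lambda>x. frechet_derivative F (at (P x)) (V x))"
proof -
  have c: "continuous_on S (\<lambda>x. frechet_derivative F (at (P x)) w)" for w
  proof -
    have "smooth_map (\<lambda>x. frechet_derivative F (at x) w)" using smooth_map_D[OF assms(1)] by blast
    then have "continuous_on UNIV (\<lambda>x. frechet_derivative F (at x) w)" by (rule smooth_cont)
    then show ?thesis using continuous_on_compose2[OF _ assms(2)] by blast
  qed
  show ?thesis
    apply (subst fd_expand[OF assms(1)])
    by (intro continuous_intros c assms)
qed

lemma chainF:
  assumes "smooth_map F" "(Q has_vector_derivative v) (at x within S)"
  shows "((\<lambda>y. F (Q y)) has_vector_derivative frechet_derivative F (at (Q x)) v) (at x within S)"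
proof -
  have "((\<lambda>y. F (Q y)) has_derivative (\<lambda>h. frechet_derivative F (at (Q x)) (h *\<^sub>R v))) (at x within S)"
    using has_derivative_compose[OF assms(2)[unfolded has_vector_derivative_def] smooth_has_deriv[OF assms(1)]] .
  then have H: "((\<lambda>y. F (Q y)) has_derivative (\<lambda>h. frechet_derivative F (at (Q x)) (h *\<^sub>R v))) (at x within S)" .
  interpret linear "frechet_derivative F (at (Q x))" by (rule smooth_lin[OF assms(1)])
  show ?thesis using H by (simp add: has_vector_derivative_def scale)
qed

lemma periodic_integral:
  fixes g :: "real \<Rightarrow> complex"
  assumes cont: "continuous_on UNIV g" and per: "\<And>u. g (u + L) = g u" and L: "L \<ge> 0"
  shows "integral {x..x+L} g = integral {0..L} g"
proof -
  define \<psi> where "\<psi> y = integral {y..y+L} g" for y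
  have D: "(\<psi> has_vector_derivative 0) (at y)" for y
  proof -
    define a where "a = y - 1"
    define b where "b = y + L + 1"
    define \<Phi> where "\<Phi> u = integral {a..u} g" for u
    have dP: "(\<Phi> has_vector_derivative g u) (at u)" if "u \<in> {a<..<b}" for u
    proof -
      have "(\<Phi> has_vector_derivative g u) (at u within {a..b})"
        unfolding \<Phi>_def using that
        by (intro integral_has_vector_derivative continuous_on_subset[OF cont]) auto
      moreover have "at u within {a..b} = at u"
        using that by (intro at_within_interior) auto
      ultimately show ?thesis by simp
    qed
    have d1: "((\<lambda>u. \<Phi> (u + L)) has_vector_derivative g (y + L)) (at y)"
    proof -
      have "(\<Phi> has_derivative (\<lambda>h. h *\<^sub>R g (y+L))) (at (y + L))"
        using dP[of "y+L"] L by (simp add: a_def b_def has_vector_derivative_def)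
      from has_derivative_compose[OF has_derivative_add[OF has_derivative_ident has_derivative_const[of L]] this]
      show ?thesis by (simp add: has_vector_derivative_def)
    qed
    have d2: "(\<Phi> has_vector_derivative g y) (at y)"
      using dP[of y] L by (simp add: a_def b_def)
    have d3: "((\<lambda>u. \<Phi> (u + L) - \<Phi> u) has_vector_derivative 0) (at y)"
      using has_vector_derivative_diff[OF d1 d2] per[of y] by simp
    show ?thesis
    proof (rule has_vector_derivative_transform_within_open[OF d3, of "ball y 1"])
      fix u assume u: "u \<in> ball y 1"
      then have u1: "a \<le> u" by (auto simp: a_def dist_real_def)
      have "integral {a..u} g + integral {u..u+L} g = integral {a..u+L} g"
        using u1 L Henstock_Kurzweil_Integration.integral_combine[where f=g and a=a and c=u and b="u+L"] integrable_continuous_interval[OF continuous_on_subset[OF cont]] by auto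
      then show "\<Phi> (u + L) - \<Phi> u = \<psi> u" by (simp add: \<Phi>_def \<psi>_def algebra_simps)
    qed auto
  qed
  have "\<exists>c. \<forall>x\<in>UNIV. \<psi> x = c"
    by (rule has_derivative_zero_constant)
      (use D in \<open>auto simp: has_vector_derivative_def intro: has_derivative_at_withinI\<close>)
  then obtain c where "\<And>x. \<psi> x = c" by blast
  then have "\<psi> x = \<psi> 0" by simp
  then show ?thesis by (simp add: \<psi>_def)
qed


lemma dQ_theta:
  "((\<lambda>\<theta>. heis_mult (cis \<theta> * z, t) w) has_vector_derivative
     (\<i> * cis \<theta> * z, 1/2 * (Re (\<i> * cis \<theta> * z) * Im (fst w) - Im (\<i> * cis \<theta> * z) * Re (fst w)))) (at \<theta> within S)"
  unfolding heis_mult_def has_vector_derivative_def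
  by (auto intro!: derivative_eq_intros simp: algebra_simps)

lemma dQ_t:
  "((\<lambda>\<tau>. heis_mult (z, \<tau>) w) has_vector_derivative (0, 1)) (at \<tau> within S)"
  unfolding heis_mult_def has_vector_derivative_def
  by (auto intro!: derivative_eq_intros simp: algebra_simps)

lemma dQ_s:
  assumes "r > 0"
  shows "((\<lambda>s. heis_mult (z,t) (gamma_r r s)) has_vector_derivative
     (\<i> * cis (s / sqrt r), sqrt r/2 + 1/2*(Re z * Im(\<i> * cis(s/sqrt r)) - Im z * Re(\<i> * cis (s/sqrt r))))) (at s within S)"
proof -
  have e: "sqrt r * (sqrt r * x) = r * x" for x using assms by (simp add: mult.assoc[symmetric])
  have e2: "complex_of_real (sqrt r) * (complex_of_real (sqrt r) * x) = of_real r * x" for x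
    using assms by (simp add: mult.assoc[symmetric] of_real_mult[symmetric] del: of_real_mult)
  show ?thesis
  using assms unfolding heis_mult_def gamma_r_def has_vector_derivative_def
  by (auto intro!: derivative_eq_intros ext simp: algebra_simps e e2 scaleR_conv_of_real)
qed

lemma drot:
  "((\<lambda>\<theta>. (cis \<theta> * w, \<tau>::real)) has_vector_derivative (\<i> * w, 0)) (at 0)"
  unfolding has_vector_derivative_def
  by (auto intro!: derivative_eq_intros simp: algebra_simps)


lemma cis_per: "cis (x + 2 * pi * real n) = cis x"
proof -
  have "cis (2 * real n * pi) = 1" by (simp add: complex_eq_iff)
  then show ?thesis by (metis cis_mult mult.commute mult.left_commute mult_1_right)
qed

lemma rot_omega:
  "Re (cis \<theta> * z) * Im (cis \<theta> * w) - Im (cis \<theta> * z) * Re (cis \<theta> * w) = Re z * Im w - Im z * Re w"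
proof -
  have "Re (cis \<theta> * z) * Im (cis \<theta> * w) - Im (cis \<theta> * z) * Re (cis \<theta> * w)
       = (Re z * Im w - Im z * Re w) * (sin \<theta>^2 + cos \<theta>^2)"
    by (simp add: power2_eq_square) algebra
  then show ?thesis by simp
qed

lemma per_nat:
  assumes "\<forall>z t. f z (t + pi) = f z t"
  shows "f z (t + real n * pi) = f z t"
proof (induction n)
  case (Suc n)
  have "f z (t + real (Suc n) * pi) = f z ((t + real n * pi) + pi)" by (simp add: algebra_simps)
  also have "\<dots> = f z (t + real n * pi)" using assms by blast
  finally show ?case using Suc by simp
qed simp

lemma cont_Q1: "r > 0 \<Longrightarrow> continuous_on S (\<lambda>s. heis_mult (z,t) (gamma_r r s))"
  unfolding heis_mult_def gamma_r_def by (auto intro!: continuous_intros)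

lemma cont_Qth: "r > 0 \<Longrightarrow> continuous_on S (\<lambda>p. heis_mult (cis (fst p) * z, t) (gamma_r r (snd p)))"
  unfolding heis_mult_def gamma_r_def by (auto intro!: continuous_intros)

lemma cont_Qt: "r > 0 \<Longrightarrow> continuous_on S (\<lambda>p. heis_mult (z, fst p) (gamma_r r (snd p)))"
  unfolding heis_mult_def gamma_r_def by (auto intro!: continuous_intros)


theorem mainTheorem11:
  fixes a b :: nat and f :: "complex \<Rightarrow> real \<Rightarrow> complex"
  assumes "0 < a" "0 < b" "coprime a b" "Cc_Hbar f"
  shows "(\<forall>\<theta> z t. I_op a b (rot \<theta> f) z t
            = I_op a b f (cis \<theta> * z) (t - 1/2 * (real a / real b) * \<theta>))
       \<and> (\<forall>z t. I_op a b (dtheta f) z t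
            = dtheta (I_op a b f) z t - complex_of_real (1/2 * (real a / real b)) * Tder (I_op a b f) z t)"
proof -
  define r where "r = real a / real b"
  define c where "c = sqrt r"
  define L where "L = 2 * pi * sqrt (real a * real b)"
  define F where "F = (\<lambda>p::complex\<times>real. f (fst p) (snd p))"
  define Q where "Q = (\<lambda>z t s. heis_mult (z,t) (gamma_r r s))"
  have r0: "r > 0" using assms by (simp add: r_def)
  have c0: "c > 0" using r0 c_def by simp
  have cc: "c * c = r" using r0 by (simp add: c_def)
  have L0: "L \<ge> 0" by (simp add: L_def)
  have sa: "sqrt (real a) > 0" "sqrt (real b) > 0" using assms by auto
  have Lc: "L / c = 2 * pi * real b"
    using sa by (simp add: L_def c_def r_def real_sqrt_mult real_sqrt_divide field_simps)
  have cL: "c * L = 2 * pi * real a"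
    using sa by (simp add: L_def c_def r_def real_sqrt_mult real_sqrt_divide field_simps)
  have sm: "smooth_map F" using assms(4) by (simp add: Cc_Hbar_def F_def)
  have perf: "\<forall>z t. f z (t + pi) = f z t" using assms(4) Cc_Hbar_def by simp
  have Iop: "I_op a b g z t = integral {0..L} (\<lambda>s. g (fst (Q z t s)) (snd (Q z t s)))" for g z t
    by (simp add: I_op_def Let_def Q_def r_def L_def)
  have contF: "continuous_on UNIV F" by (rule smooth_cont[OF sm])
  have contH: "continuous_on S (\<lambda>s. F (Q z t s))" for S z t
    using continuous_on_compose2[OF contF cont_Q1[OF r0]] by (auto simp: Q_def)
  have Qform: "Q z t s = (z + of_real c * cis (s / c), t + 1/2 * c * s + 1/2 * (Re z * Im (of_real c * cis (s/c)) - Im z * Re (of_real c * cis (s/c))))" for z t s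
    by (simp add: Q_def heis_mult_def gamma_r_def c_def)
  have HL: "F (Q z t (s + L)) = F (Q z t s)" for z t s
  proof -
    have "(s + L) / c = s / c + 2 * pi * real b" using Lc c0 by (simp add: add_divide_distrib)
    then have e1: "cis ((s + L) / c) = cis (s / c)" by (simp add: cis_per)
    have e2: "1/2 * c * (s + L) = 1/2 * c * s + real a * pi" using cL by (simp add: algebra_simps)
    have "fst (Q z t (s+L)) = fst (Q z t s)" "snd (Q z t (s+L)) = snd (Q z t s) + real a * pi"
      by (simp_all only: Qform e1 e2 fst_conv snd_conv)
    then show ?thesis using per_nat[OF perf] by (simp add: F_def)
  qed

  have P1: "I_op a b (rot \<theta> f) z t = I_op a b f (cis \<theta> * z) (t - 1/2 * r * \<theta>)" for \<theta> z t
  proof -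
    define g2 where "g2 = (\<lambda>u. F (Q (cis \<theta> * z) (t - 1/2 * r * \<theta>) u))"
    have pt: "rot \<theta> f (fst (Q z t s)) (snd (Q z t s)) = (g2 \<circ> (+) (c * \<theta>)) s" for s
    proof -
      have a1: "(c * \<theta> + s) / c = \<theta> + s / c" using c0 by (simp add: field_simps)
      have a2: "of_real c * cis (\<theta> + s / c) = cis \<theta> * (of_real c * cis (s / c))"
        by (simp add: cis_mult[symmetric])
      have a5: "t - 1/2 * r * \<theta> + 1/2 * c * (c * \<theta> + s) = t + 1/2 * c * s"
        by (simp add: algebra_simps flip: cc)
      have a3: "fst (Q (cis \<theta> * z) (t - 1/2*r*\<theta>) (c*\<theta> + s)) = cis \<theta> * fst (Q z t s)"
        by (simp only: Qform a1 a2 fst_conv) (simp add: algebra_simps)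
      have a4: "snd (Q (cis \<theta> * z) (t - 1/2*r*\<theta>) (c*\<theta> + s)) = snd (Q z t s)"
        by (simp only: Qform a1 a2 snd_conv rot_omega a5)
      show ?thesis by (simp only: rot_def g2_def F_def comp_def a3 a4 fst_conv snd_conv)
    qed
    have "I_op a b (rot \<theta> f) z t = integral {0..L} (g2 \<circ> (+) (c*\<theta>))" by (simp add: Iop pt comp_def)
    also have "\<dots> = integral {0 + c*\<theta> .. L + c*\<theta>} g2" by (rule integral_shift_Icc_real)
    also have "\<dots> = integral {0..L} g2"
      using periodic_integral[of g2 L "c*\<theta>"] contH HL L0 by (simp add: g2_def add.commute)
    also have "\<dots> = I_op a b f (cis \<theta> * z) (t - 1/2*r*\<theta>)" by (simp add: Iop g2_def F_def)
    finally show ?thesis .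
  qed

  define D where "D = (\<lambda>p. frechet_derivative F (at p))"
  define V1 where "V1 = (\<lambda>\<theta> z s. (\<i> * cis \<theta> * z, 1/2 * (Re (\<i> * cis \<theta> * z) * Im (fst (gamma_r r s)) - Im (\<i> * cis \<theta> * z) * Re (fst (gamma_r r s)))))"
  define V4 where "V4 = (\<lambda>z s. (\<i> * cis (s / sqrt r), sqrt r/2 + 1/2*(Re z * Im(\<i> * cis(s/sqrt r)) - Im z * Re(\<i> * cis (s/sqrt r)))))"
  have contV1: "continuous_on S (\<lambda>p. V1 (fst p) z (snd p))" for S z
    unfolding V1_def gamma_r_def using r0 by (auto intro!: continuous_intros)
  have contV4: "continuous_on S (\<lambda>s. V4 z s)" for S z
    unfolding V4_def using r0 by (auto intro!: continuous_intros)
  have contQ: "continuous_on S (Q z t)" for S z t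
    using cont_Q1[OF r0] by (simp add: Q_def)
  have intg: "(\<lambda>s. D (Q z t s) (V s)) integrable_on {0..L}" if "continuous_on UNIV V" for z t V
    unfolding D_def
    by (intro integrable_continuous_interval fd_cont[OF sm] contQ
        continuous_on_subset[OF that]) auto
  have P2: "I_op a b (dtheta f) z t = dtheta (I_op a b f) z t - complex_of_real (1/2*r) * Tder (I_op a b f) z t" for z t
  proof -
    have dth: "dtheta (I_op a b f) z t = integral {0..L} (\<lambda>s. D (Q z t s) (V1 0 z s))"
    proof -
      have "((\<lambda>\<theta>. integral (cbox 0 L) (\<lambda>s. F (Q (cis \<theta> * z) t s))) has_vector_derivative
              integral (cbox 0 L) (\<lambda>s. D (Q (cis 0 * z) t s) (V1 0 z s))) (at 0 within UNIV)"
      proof (rule leibniz_rule_vector_derivative[where fx = "\<lambda>\<theta> s. D (Q (cis \<theta> * z) t s) (V1 \<theta> z s)"])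
        fix x s
        show "((\<lambda>x. F (Q (cis x * z) t s)) has_vector_derivative D (Q (cis x * z) t s) (V1 x z s)) (at x within UNIV)"
          unfolding Q_def D_def V1_def by (rule chainF[OF sm dQ_theta])
      next
        fix x show "(\<lambda>s. F (Q (cis x * z) t s)) integrable_on cbox 0 L"
          using contH by (simp add: integrable_continuous_interval)
      next
        show "continuous_on (UNIV \<times> cbox 0 L) (\<lambda>(x, s). D (Q (cis x * z) t s) (V1 x z s))"
          unfolding split_beta' D_def Q_def
          by (intro fd_cont[OF sm] cont_Qth[OF r0] contV1)
      qed auto
      then have "vector_derivative (\<lambda>\<theta>. integral {0..L} (\<lambda>s. F (Q (cis \<theta> * z) t s))) (at 0)
          = integral {0..L} (\<lambda>s. D (Q z t s) (V1 0 z s))"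
        by (intro vector_derivative_at) simp
      moreover have "(\<lambda>\<theta>. rot \<theta> (I_op a b f) z t) = (\<lambda>\<theta>. integral {0..L} (\<lambda>s. F (Q (cis \<theta> * z) t s)))"
        by (simp add: rot_def Iop F_def)
      ultimately show ?thesis by (simp add: dtheta_def)
    qed
    have tder: "Tder (I_op a b f) z t = integral {0..L} (\<lambda>s. D (Q z t s) (0,1))"
    proof -
      have "((\<lambda>\<tau>. integral (cbox 0 L) (\<lambda>s. F (Q z \<tau> s))) has_vector_derivative
              integral (cbox 0 L) (\<lambda>s. D (Q z t s) (0,1))) (at t within UNIV)"
      proof (rule leibniz_rule_vector_derivative[where fx = "\<lambda>\<tau> s. D (Q z \<tau> s) (0,1)"])
        fix x s
        show "((\<lambda>x. F (Q z x s)) has_vector_derivative D (Q z x s) (0,1)) (at x within UNIV)"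
          unfolding Q_def D_def by (rule chainF[OF sm dQ_t])
      next
        fix x show "(\<lambda>s. F (Q z x s)) integrable_on cbox 0 L"
          using contH by (simp add: integrable_continuous_interval)
      next
        show "continuous_on (UNIV \<times> cbox 0 L) (\<lambda>(x, s). D (Q z x s) (0,1))"
          unfolding split_beta' D_def Q_def
          by (intro fd_cont[OF sm] cont_Qt[OF r0] continuous_intros)
      qed auto
      then have "vector_derivative (\<lambda>\<tau>. integral {0..L} (\<lambda>s. F (Q z \<tau> s))) (at t)
          = integral {0..L} (\<lambda>s. D (Q z t s) (0,1))"
        by (intro vector_derivative_at) simp
      moreover have "(\<lambda>\<tau>. I_op a b f z \<tau>) = (\<lambda>\<tau>. integral {0..L} (\<lambda>s. F (Q z \<tau> s)))"
        by (simp add: Iop F_def)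
      ultimately show ?thesis by (simp add: Tder_def)
    qed
    have dtf: "dtheta f w \<tau> = D (w,\<tau>) (\<i> * w, 0)" for w \<tau>
    proof -
      have "((\<lambda>\<theta>. F (cis \<theta> * w, \<tau>)) has_vector_derivative D (cis 0 * w, \<tau>) (\<i> * w, 0)) (at 0)"
        unfolding D_def using chainF[OF sm drot, of w \<tau>] by simp
      then show ?thesis by (simp add: dtheta_def rot_def F_def vector_derivative_at)
    qed
    have ftc: "((\<lambda>s. D (Q z t s) (V4 z s)) has_integral (F (Q z t L) - F (Q z t 0))) {0..L}"
      by (rule fundamental_theorem_of_calculus[OF L0])
        (unfold Q_def D_def V4_def, rule chainF[OF sm dQ_s[OF r0]])
    have ftc0: "integral {0..L} (\<lambda>s. D (Q z t s) (V4 z s)) = 0"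
      using ftc HL[of z t 0] by (simp add: integral_unique)
    have vid: "(\<i> * fst (Q z t s), 0) = V1 0 z s - (r/2) *\<^sub>R (0,1) + c *\<^sub>R V4 z s" for s
    proof -
      have e: "sqrt r * (sqrt r * x) = r * x" for x using r0 by (simp add: mult.assoc[symmetric])
      show ?thesis
        using r0 by (simp add: V1_def V4_def Qform gamma_r_def c_def prod_eq_iff complex_eq_iff algebra_simps e)
    qed
    have pt: "dtheta f (fst (Q z t s)) (snd (Q z t s)) = D (Q z t s) (V1 0 z s) - (r/2) *\<^sub>R D (Q z t s) (0,1) + c *\<^sub>R D (Q z t s) (V4 z s)" for s
    proof -
      interpret linear "D (Q z t s)" unfolding D_def by (rule smooth_lin[OF sm])
      show ?thesis by (simp only: dtf prod.collapse vid[of s] add diff scale)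
    qed
    have "I_op a b (dtheta f) z t = integral {0..L} (\<lambda>s. D (Q z t s) (V1 0 z s) - (r/2) *\<^sub>R D (Q z t s) (0,1) + c *\<^sub>R D (Q z t s) (V4 z s))"
      by (simp add: Iop pt)
    also have "\<dots> = integral {0..L} (\<lambda>s. D (Q z t s) (V1 0 z s)) - (r/2) *\<^sub>R integral {0..L} (\<lambda>s. D (Q z t s) (0,1)) + c *\<^sub>R integral {0..L} (\<lambda>s. D (Q z t s) (V4 z s))"
    proof -
      have iA: "(\<lambda>s. D (Q z t s) (V1 0 z s)) integrable_on {0..L}"
        by (rule intg) (unfold V1_def gamma_r_def, use r0 in \<open>auto intro!: continuous_intros\<close>)
      have iB: "(\<lambda>s. D (Q z t s) (0,1)) integrable_on {0..L}"
        by (rule intg) (auto intro!: continuous_intros)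
      have iC: "(\<lambda>s. D (Q z t s) (V4 z s)) integrable_on {0..L}"
        by (rule intg) (rule contV4)
      have "integral {0..L} (\<lambda>s. D (Q z t s) (V1 0 z s) - (r/2) *\<^sub>R D (Q z t s) (0,1) + c *\<^sub>R D (Q z t s) (V4 z s))
          = integral {0..L} (\<lambda>s. D (Q z t s) (V1 0 z s) - (r/2) *\<^sub>R D (Q z t s) (0,1)) + integral {0..L} (\<lambda>s. c *\<^sub>R D (Q z t s) (V4 z s))"
        by (intro integral_add integrable_diff integrable_cmul iA iB iC)
      also have "integral {0..L} (\<lambda>s. D (Q z t s) (V1 0 z s) - (r/2) *\<^sub>R D (Q z t s) (0,1))
          = integral {0..L} (\<lambda>s. D (Q z t s) (V1 0 z s)) - integral {0..L} (\<lambda>s. (r/2) *\<^sub>R D (Q z t s) (0,1))"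
        by (intro integral_diff integrable_cmul iA iB)
      finally show ?thesis by simp
    qed
    also have "\<dots> = dtheta (I_op a b f) z t - complex_of_real (1/2*r) * Tder (I_op a b f) z t"
      by (simp add: dth tder ftc0 scaleR_conv_of_real)
    finally show ?thesis .
  qed

  show ?thesis using P1 P2 unfolding r_def by simp
qed

end
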